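(* Let $k$ be a field, $(X,\leq)$ a locally finite preordered set and $C=IC(X)$. Then the set $\{e_{x,y}\mid x,y\in X,\ x\leq y\}$ is a coradical basis of $C$.
   Context: $(X,\leq)$ is a reflexive transitive relation with all intervals $[x,y]$ finite. $IC(X)$ has $k$-basis $\{e_{x,y}\mid x\leq y\}$, $\Delta(e_{x,y})=\sum_{x\leq z\leq y}e_{x,z}\otimes e_{z,y}$, $\varepsilon(e_{x,y})=\delta_{x,y}$. The coradical $C_0$ is the sum of all simple subcoalgebras; $U\wedge V=\Delta^{-1}(U\otimes C+C\otimes V)$ and $C_n=C_0\wedge C_{n-1}$ for $n\geq 1$. A coradical basis of $C$ is a $k$-basis $\mathcal B$ with $\mathcal B\cap C_n$ a basis of $C_n$ for every $n$. *)

theory Defs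
  imports Complex_Main "HOL-Library.Function_Algebras"
begin

text \<open>Vector spaces over a field 'k are modelled as subsets of function spaces 'b \<Rightarrow> 'k
  (finitely supported functions = formal linear combinations of basis indices of type 'b),
  with pointwise scalar multiplication.  The tensor product of two such free spaces with
  index type 'b is modelled as (finitely supported) functions on 'b \<times> 'b, the elementary
  tensor u \<otimes> v being the function (p,q) \<mapsto> u p * v q.\<close>

definition fscale :: "'k::field \<Rightarrow> ('b \<Rightarrow> 'k) \<Rightarrow> ('b \<Rightarrow> 'k)" where
  "fscale c f = (\<lambda>x. c * f x)"

abbreviation lspan :: "('b \<Rightarrow> 'k::field) set \<Rightarrow> ('b \<Rightarrow> 'k) set" where
  "lspan S \<equiv> module.span fscale S"

abbreviation lsubspace :: "('b \<Rightarrow> 'k::field) set \<Rightarrow> bool" where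
  "lsubspace S \<equiv> module.subspace fscale S"

abbreviation lindependent :: "('b \<Rightarrow> 'k::field) set \<Rightarrow> bool" where
  "lindependent S \<equiv> \<not> module.dependent fscale S"

definition tens :: "('b \<Rightarrow> 'k::field) \<Rightarrow> ('b \<Rightarrow> 'k) \<Rightarrow> ('b \<times> 'b \<Rightarrow> 'k)" where
  "tens u v = (\<lambda>(p, q). u p * v q)"

definition tens_sp :: "('b \<Rightarrow> 'k::field) set \<Rightarrow> ('b \<Rightarrow> 'k) set \<Rightarrow> ('b \<times> 'b \<Rightarrow> 'k) set" where
  "tens_sp U V = lspan {tens u v | u v. u \<in> U \<and> v \<in> V}"

definition subcoalgebra ::
  "('b \<Rightarrow> 'k::field) set \<Rightarrow> (('b \<Rightarrow> 'k) \<Rightarrow> ('b \<times> 'b \<Rightarrow> 'k)) \<Rightarrow> ('b \<Rightarrow> 'k) set \<Rightarrow> bool" where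
  "subcoalgebra C D E \<longleftrightarrow> lsubspace E \<and> E \<subseteq> C \<and> (\<forall>f\<in>E. D f \<in> tens_sp E E)"

definition simple_subcoalgebra ::
  "('b \<Rightarrow> 'k::field) set \<Rightarrow> (('b \<Rightarrow> 'k) \<Rightarrow> ('b \<times> 'b \<Rightarrow> 'k)) \<Rightarrow> ('b \<Rightarrow> 'k) set \<Rightarrow> bool" where
  "simple_subcoalgebra C D E \<longleftrightarrow> subcoalgebra C D E \<and> E \<noteq> {0} \<and>
     (\<forall>F. subcoalgebra C D F \<and> F \<subseteq> E \<longrightarrow> F = {0} \<or> F = E)"

definition coradical ::
  "('b \<Rightarrow> 'k::field) set \<Rightarrow> (('b \<Rightarrow> 'k) \<Rightarrow> ('b \<times> 'b \<Rightarrow> 'k)) \<Rightarrow> ('b \<Rightarrow> 'k) set" where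
  "coradical C D = lspan (\<Union> {E. simple_subcoalgebra C D E})"

definition wedge ::
  "('b \<Rightarrow> 'k::field) set \<Rightarrow> (('b \<Rightarrow> 'k) \<Rightarrow> ('b \<times> 'b \<Rightarrow> 'k)) \<Rightarrow> ('b \<Rightarrow> 'k) set \<Rightarrow> ('b \<Rightarrow> 'k) set \<Rightarrow> ('b \<Rightarrow> 'k) set" where
  "wedge C D U V = {f \<in> C. D f \<in> lspan (tens_sp U C \<union> tens_sp C V)}"

fun coradical_filt ::
  "('b \<Rightarrow> 'k::field) set \<Rightarrow> (('b \<Rightarrow> 'k) \<Rightarrow> ('b \<times> 'b \<Rightarrow> 'k)) \<Rightarrow> nat \<Rightarrow> ('b \<Rightarrow> 'k) set" where
  "coradical_filt C D 0 = coradical C D"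
| "coradical_filt C D (Suc n) = wedge C D (coradical C D) (coradical_filt C D n)"

definition is_basis_of :: "('b \<Rightarrow> 'k::field) set \<Rightarrow> ('b \<Rightarrow> 'k) set \<Rightarrow> bool" where
  "is_basis_of B V \<longleftrightarrow> B \<subseteq> V \<and> lindependent B \<and> lspan B = V"

definition coradical_basis ::
  "('b \<Rightarrow> 'k::field) set \<Rightarrow> (('b \<Rightarrow> 'k) \<Rightarrow> ('b \<times> 'b \<Rightarrow> 'k)) \<Rightarrow> ('b \<Rightarrow> 'k) set \<Rightarrow> bool" where
  "coradical_basis C D B \<longleftrightarrow> is_basis_of B C \<and>
     (\<forall>n. is_basis_of (B \<inter> coradical_filt C D n) (coradical_filt C D n))"

definition IC_carrier :: "('a \<Rightarrow> 'a \<Rightarrow> bool) \<Rightarrow> ('a \<times> 'a \<Rightarrow> 'k::field) set" where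
  "IC_carrier le = {f. finite {p. f p \<noteq> 0} \<and> (\<forall>x y. f (x, y) \<noteq> 0 \<longrightarrow> le x y)}"

definition e_basis :: "'a \<Rightarrow> 'a \<Rightarrow> ('a \<times> 'a \<Rightarrow> 'k::field)" where
  "e_basis x y = (\<lambda>p. if p = (x, y) then 1 else 0)"

text \<open>Comultiplication, the linear extension of
  e_{x,y} \<mapsto> \<Sum>_{x\<le>z\<le>y} e_{x,z} \<otimes> e_{z,y}: coefficient of e_{a,b} \<otimes> e_{c,d} in \<Delta> f.\<close>
definition IC_delta :: "('a \<Rightarrow> 'a \<Rightarrow> bool) \<Rightarrow> ('a \<times> 'a \<Rightarrow> 'k::field) \<Rightarrow> (('a \<times> 'a) \<times> ('a \<times> 'a) \<Rightarrow> 'k)" where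
  "IC_delta le f = (\<lambda>((a, b), (c, d)). if b = c \<and> le a b \<and> le b d then f (a, d) else 0)"

end

theory Submission
  imports Defs
begin

lemma module_fscale: "module (fscale :: 'k::field \<Rightarrow> ('b \<Rightarrow> 'k) \<Rightarrow> ('b \<Rightarrow> 'k))"
  by unfold_locales (auto simp: fscale_def algebra_simps)

interpretation fs: module "fscale :: 'k::field \<Rightarrow> ('b \<Rightarrow> 'k) \<Rightarrow> ('b \<Rightarrow> 'k)"
  by (rule module_fscale)

lemma sum_fun_app: "(sum f A) x = sum (\<lambda>a. f a x) A"
  by (induct A rule: infinite_finite_induct) auto

lemma fscale_app[simp]: "fscale c f x = c * f x"
  by (simp add: fscale_def)

definition ep :: "'b \<Rightarrow> ('b \<Rightarrow> 'k::field)" where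
  "ep p = (\<lambda>q. if q = p then 1 else 0)"

definition MS :: "'b set \<Rightarrow> ('b \<Rightarrow> 'k::field) set" where
  "MS P = {f. finite {p. f p \<noteq> 0} \<and> (\<forall>p. f p \<noteq> 0 \<longrightarrow> p \<in> P)}"

lemma MS_subspace: "lsubspace (MS P :: ('b \<Rightarrow> 'k::field) set)"
proof (rule fs.subspaceI)
  show "0 \<in> MS P" by (simp add: MS_def)
next
  fix x y :: "'b \<Rightarrow> 'k" assume x: "x \<in> MS P" and y: "y \<in> MS P"
  have sub: "{p. (x + y) p \<noteq> 0} \<subseteq> {p. x p \<noteq> 0} \<union> {p. y p \<noteq> 0}" by auto
  have fx: "finite {p. x p \<noteq> 0}" and fy: "finite {p. y p \<noteq> 0}" using x y by (simp_all add: MS_def)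
  have fin: "finite {p. (x + y) p \<noteq> 0}" by (rule finite_subset[OF sub]) (simp add: fx fy)
  have "\<forall>p. (x + y) p \<noteq> 0 \<longrightarrow> p \<in> P"
  proof (intro allI impI)
    fix p assume "(x + y) p \<noteq> 0"
    then have "x p \<noteq> 0 \<or> y p \<noteq> 0" by auto
    then show "p \<in> P" using x y unfolding MS_def by blast
  qed
  then show "x + y \<in> MS P" using fin unfolding MS_def by blast
next
  fix c and x :: "'b \<Rightarrow> 'k" assume x: "x \<in> MS P"
  have sub: "{p. fscale c x p \<noteq> 0} \<subseteq> {p. x p \<noteq> 0}" by auto
  have fx: "finite {p. x p \<noteq> 0}" using x by (simp add: MS_def)
  have fin: "finite {p. fscale c x p \<noteq> 0}" by (rule finite_subset[OF sub fx])
  have "\<forall>p. fscale c x p \<noteq> 0 \<longrightarrow> p \<in> P"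
    using x unfolding MS_def by auto
  then show "fscale c x \<in> MS P" using fin unfolding MS_def by blast
qed

lemma ep_MS: "p \<in> P \<Longrightarrow> ep p \<in> MS P"
  by (simp add: MS_def ep_def)

lemma ep_MS_iff: "(ep p :: 'b \<Rightarrow> 'k::field) \<in> MS P \<longleftrightarrow> p \<in> P"
  by (auto simp: MS_def ep_def)

lemma MS_decomp:
  fixes f :: "'b \<Rightarrow> 'k::field"
  assumes "finite {p. f p \<noteq> 0}"
  shows "f = (\<Sum>p\<in>{p. f p \<noteq> 0}. fscale (f p) (ep p))"
proof
  fix x
  show "f x = (\<Sum>p\<in>{p. f p \<noteq> 0}. fscale (f p) (ep p)) x"
  proof -
    have "(\<Sum>p\<in>{p. f p \<noteq> 0}. fscale (f p) (ep p)) x = (\<Sum>p\<in>{p. f p \<noteq> 0}. if p = x then f p else 0)"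
      unfolding sum_fun_app by (intro sum.cong) (auto simp: ep_def)
    also have "\<dots> = (if x \<in> {p. f p \<noteq> 0} then f x else 0)"
      using assms by (rule sum.delta)
    finally show ?thesis by auto
  qed
qed

lemma MS_sub:
  fixes E :: "('b \<Rightarrow> 'k::field) set"
  assumes "lsubspace E" "\<And>p. p \<in> P \<Longrightarrow> ep p \<in> E"
  shows "MS P \<subseteq> E"
proof
  fix f :: "'b \<Rightarrow> 'k" assume f: "f \<in> MS P"
  then have fin: "finite {p. f p \<noteq> 0}" by (simp add: MS_def)
  have "(\<Sum>p\<in>{p. f p \<noteq> 0}. fscale (f p) (ep p)) \<in> E"
  proof (rule fs.subspace_sum[OF assms(1)])
    fix p assume "p \<in> {p. f p \<noteq> 0}"
    then have "p \<in> P" using f by (simp add: MS_def)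
    then show "fscale (f p) (ep p) \<in> E" by (rule fs.subspace_scale[OF assms(1) assms(2)])
  qed
  then show "f \<in> E" by (simp only: MS_decomp[OF fin, symmetric])
qed

lemma span_ep: "lspan (ep ` P) = (MS P :: ('b \<Rightarrow> 'k::field) set)"
proof
  show "lspan (ep ` P) \<subseteq> (MS P :: ('b \<Rightarrow> 'k::field) set)"
    by (rule fs.span_minimal) (auto simp: MS_subspace ep_MS)
  show "MS P \<subseteq> lspan (ep ` P)"
    by (rule MS_sub) (auto intro: fs.span_base)
qed

lemma ep_indep: "lindependent (ep ` P :: ('b \<Rightarrow> 'k::field) set)"
  unfolding fs.independent_explicit_module
proof (intro allI impI)
  fix t u v
  assume t: "finite t" "t \<subseteq> ep ` P" and s: "(\<Sum>v\<in>t. fscale (u v) v) = (0 :: 'b \<Rightarrow> 'k)" and v: "v \<in> t"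
  from t(2) v obtain p where p: "v = ep p" by blast
  have "0 = (\<Sum>w\<in>t. fscale (u w) w) p" using s by simp
  also have "\<dots> = (\<Sum>w\<in>t. u w * w p)" by (simp add: sum_fun_app)
  also have "\<dots> = u v * v p + (\<Sum>w\<in>t - {v}. u w * w p)"
    using t v by (simp add: sum.remove)
  also have "(\<Sum>w\<in>t - {v}. u w * w p) = 0"
  proof (rule sum.neutral, rule ballI)
    fix w assume "w \<in> t - {v}"
    then have w: "w \<in> ep ` P" "w \<noteq> v" using t(2) by blast+
    then obtain q where q: "w = ep q" by blast
    with w(2) p have "q \<noteq> p" by blast
    then show "u w * w p = 0" using q by (simp add: ep_def)
  qed
  finally show "u v = 0" using p by (simp add: ep_def)
qed

lemma basis_ep: "is_basis_of (ep ` P) (MS P :: ('b \<Rightarrow> 'k::field) set)"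
  unfolding is_basis_of_def using ep_indep[of P] span_ep[of P] ep_MS[of _ P] by (intro conjI) auto


lemma MS_mono: "P \<subseteq> Q \<Longrightarrow> MS P \<subseteq> MS Q"
  unfolding MS_def by auto

lemma slice_left:
  fixes h :: "'b \<times> 'b \<Rightarrow> 'k::field"
  assumes V: "lsubspace V" and h: "h \<in> tens_sp U V"
  shows "(\<lambda>q. h (p, q)) \<in> V"
proof -
  have "h \<in> {h. (\<lambda>q. h (p, q)) \<in> V}"
  proof (rule fs.span_subspace_induct[OF h[unfolded tens_sp_def]])
    show "lsubspace {h :: 'b \<times> 'b \<Rightarrow> 'k. (\<lambda>q. h (p, q)) \<in> V}"
    proof (rule fs.subspaceI)
      show "0 \<in> {h :: 'b \<times> 'b \<Rightarrow> 'k. (\<lambda>q. h (p, q)) \<in> V}"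
        using fs.subspace_0[OF V] by (simp add: zero_fun_def)
    next
      fix x y :: "'b \<times> 'b \<Rightarrow> 'k"
      assume "x \<in> {h. (\<lambda>q. h (p, q)) \<in> V}" "y \<in> {h. (\<lambda>q. h (p, q)) \<in> V}"
      then have "(\<lambda>q. x (p, q)) + (\<lambda>q. y (p, q)) \<in> V" by (simp add: fs.subspace_add[OF V])
      moreover have "(\<lambda>q. x (p, q)) + (\<lambda>q. y (p, q)) = (\<lambda>q. (x + y) (p, q))" by (simp add: fun_eq_iff)
      ultimately show "x + y \<in> {h. (\<lambda>q. h (p, q)) \<in> V}" by simp
    next
      fix c and x :: "'b \<times> 'b \<Rightarrow> 'k"
      assume "x \<in> {h. (\<lambda>q. h (p, q)) \<in> V}"
      then have "fscale c (\<lambda>q. x (p, q)) \<in> V" by (simp add: fs.subspace_scale[OF V])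
      moreover have "fscale c (\<lambda>q. x (p, q)) = (\<lambda>q. fscale c x (p, q))" by (simp add: fun_eq_iff)
      ultimately show "fscale c x \<in> {h. (\<lambda>q. h (p, q)) \<in> V}" by simp
    qed
  next
    fix x assume "x \<in> {tens u v |u v. u \<in> U \<and> v \<in> V}"
    then obtain u v where x: "x = tens u v" and v: "v \<in> V" by blast
    have "(\<lambda>q. x (p, q)) = fscale (u p) v" by (simp add: x tens_def fun_eq_iff)
    with v show "x \<in> {h. (\<lambda>q. h (p, q)) \<in> V}" by (simp add: fs.subspace_scale[OF V])
  qed
  then show ?thesis by simp
qed

lemma slice_right:
  fixes h :: "'b \<times> 'b \<Rightarrow> 'k::field"
  assumes U: "lsubspace U" and h: "h \<in> tens_sp U V"
  shows "(\<lambda>q. h (q, p)) \<in> U"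
proof -
  have "h \<in> {h. (\<lambda>q. h (q, p)) \<in> U}"
  proof (rule fs.span_subspace_induct[OF h[unfolded tens_sp_def]])
    show "lsubspace {h :: 'b \<times> 'b \<Rightarrow> 'k. (\<lambda>q. h (q, p)) \<in> U}"
    proof (rule fs.subspaceI)
      show "0 \<in> {h :: 'b \<times> 'b \<Rightarrow> 'k. (\<lambda>q. h (q, p)) \<in> U}"
        using fs.subspace_0[OF U] by (simp add: zero_fun_def)
    next
      fix x y :: "'b \<times> 'b \<Rightarrow> 'k"
      assume "x \<in> {h. (\<lambda>q. h (q, p)) \<in> U}" "y \<in> {h. (\<lambda>q. h (q, p)) \<in> U}"
      then have "(\<lambda>q. x (q, p)) + (\<lambda>q. y (q, p)) \<in> U" by (simp add: fs.subspace_add[OF U])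
      moreover have "(\<lambda>q. x (q, p)) + (\<lambda>q. y (q, p)) = (\<lambda>q. (x + y) (q, p))" by (simp add: fun_eq_iff)
      ultimately show "x + y \<in> {h. (\<lambda>q. h (q, p)) \<in> U}" by simp
    next
      fix c and x :: "'b \<times> 'b \<Rightarrow> 'k"
      assume "x \<in> {h. (\<lambda>q. h (q, p)) \<in> U}"
      then have "fscale c (\<lambda>q. x (q, p)) \<in> U" by (simp add: fs.subspace_scale[OF U])
      moreover have "fscale c (\<lambda>q. x (q, p)) = (\<lambda>q. fscale c x (q, p))" by (simp add: fun_eq_iff)
      ultimately show "fscale c x \<in> {h. (\<lambda>q. h (q, p)) \<in> U}" by simp
    qed
  next
    fix x assume "x \<in> {tens u v |u v. u \<in> U \<and> v \<in> V}"
    then obtain u v where x: "x = tens u v" and u: "u \<in> U" by blast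
    have "(\<lambda>q. x (q, p)) = fscale (v p) u" by (simp add: x tens_def fun_eq_iff mult.commute)
    with u show "x \<in> {h. (\<lambda>q. h (q, p)) \<in> U}" by (simp add: fs.subspace_scale[OF U])
  qed
  then show ?thesis by simp
qed

lemma delta_app: "IC_delta le f ((a, b), (c, d)) = (if b = c \<and> le a b \<and> le b d then f (a, d) else 0)"
  by (simp add: IC_delta_def)

lemma IC_eq: "IC_carrier le = MS {(x, y). le x y}"
  unfolding IC_carrier_def MS_def by auto


definition Tset :: "('a \<Rightarrow> 'a \<Rightarrow> bool) \<Rightarrow> ('a \<times> 'a \<Rightarrow> 'k::field) \<Rightarrow> ('a \<times> 'a \<times> 'a) set" where
  "Tset le f = {(a, b, d). f (a, d) \<noteq> 0 \<and> le a b \<and> le b d}"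

definition trm :: "('a \<times> 'a \<Rightarrow> 'k::field) \<Rightarrow> 'a \<times> 'a \<times> 'a \<Rightarrow> (('a \<times> 'a) \<times> ('a \<times> 'a) \<Rightarrow> 'k)" where
  "trm f t = (case t of (a, b, d) \<Rightarrow> fscale (f (a, d)) (tens (ep (a, b)) (ep (b, d))))"

fun Wn :: "('a \<Rightarrow> 'a \<Rightarrow> bool) \<Rightarrow> nat \<Rightarrow> ('a \<times> 'a) set" where
  "Wn le 0 = {(x, y). le x y \<and> le y x}"
| "Wn le (Suc n) = {(a, d). le a d \<and> (\<forall>b. le a b \<and> le b d \<longrightarrow> (a, b) \<in> Wn le 0 \<or> (b, d) \<in> Wn le n)}"

definition Wd :: "('a \<Rightarrow> 'a \<Rightarrow> bool) \<Rightarrow> ('a \<times> 'a) set \<Rightarrow> ('a \<times> 'a) set \<Rightarrow> ('a \<times> 'a) set" where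
  "Wd le P Q = {(a, d). le a d \<and> (\<forall>b. le a b \<and> le b d \<longrightarrow> (a, b) \<in> P \<or> (b, d) \<in> Q)}"

context
  fixes le :: "'a \<Rightarrow> 'a \<Rightarrow> bool"
  assumes lrefl: "\<forall>x. le x x"
    and ltrans: "\<forall>x y z. le x y \<longrightarrow> le y z \<longrightarrow> le x z"
    and llocfin: "\<forall>x y. finite {z. le x z \<and> le z y}"
begin

lemma Tset_finite:
  fixes f :: "'a \<times> 'a \<Rightarrow> 'k::field"
  assumes f: "finite {p. f p \<noteq> 0}"
  shows "finite (Tset le f)"
proof -
  let ?S = "SIGMA p:{p. f p \<noteq> 0}. {z. le (fst p) z \<and> le z (snd p)}"
  have "finite ?S" using f llocfin by (intro finite_SigmaI) auto
  moreover have "Tset le f \<subseteq> (\<lambda>(p, b). (fst p, b, snd p)) ` ?S"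
  proof
    fix t assume "t \<in> Tset le f"
    then obtain a b d where t: "t = (a, b, d)" "f (a, d) \<noteq> 0" "le a b" "le b d"
      unfolding Tset_def by blast
    then have "((a, d), b) \<in> ?S" by simp
    then show "t \<in> (\<lambda>(p, b). (fst p, b, snd p)) ` ?S" using t(1) by force
  qed
  ultimately show ?thesis by (rule finite_surj)
qed

lemma delta_decomp:
  fixes f :: "'a \<times> 'a \<Rightarrow> 'k::field"
  assumes f: "finite {p. f p \<noteq> 0}"
  shows "IC_delta le f = (\<Sum>t\<in>Tset le f. trm f t)"
proof (rule ext)
  fix z :: "('a \<times> 'a) \<times> ('a \<times> 'a)"
  obtain x y u w where z: "z = ((x, y), (u, w))" by (metis prod.exhaust)
  let ?c = "if y = u then f (x, w) else 0"
  have "(\<Sum>t\<in>Tset le f. trm f t) z = (\<Sum>t\<in>Tset le f. if t = (x, y, w) then ?c else 0)"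
    unfolding sum_fun_app
  proof (rule sum.cong[OF refl])
    fix t assume "t \<in> Tset le f"
    obtain a b d where t: "t = (a, b, d)" by (metis prod.exhaust)
    show "trm f t z = (if t = (x, y, w) then ?c else 0)"
      by (auto simp: t z trm_def tens_def ep_def)
  qed
  also have "\<dots> = (if (x, y, w) \<in> Tset le f then ?c else 0)"
    by (rule sum.delta[OF Tset_finite[OF f]])
  also have "\<dots> = IC_delta le f z"
    by (auto simp: z delta_app Tset_def)
  finally show "IC_delta le f z = (\<Sum>t\<in>Tset le f. trm f t) z" by simp
qed

lemma sub_ep:
  fixes E :: "('a \<times> 'a \<Rightarrow> 'k::field) set"
  assumes E: "subcoalgebra (IC_carrier le) (IC_delta le) E" and f: "f \<in> E" and fad: "f (a, d) \<noteq> 0"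
  shows "ep (a, d) \<in> E"
proof -
  have sE: "lsubspace E" and EC: "E \<subseteq> IC_carrier le" and DE: "\<And>g. g \<in> E \<Longrightarrow> IC_delta le g \<in> tens_sp E E"
    using E unfolding subcoalgebra_def by auto
  have lad: "le a d" using f EC fad unfolding IC_carrier_def by auto
  define g1 where "g1 = (\<lambda>q. IC_delta le f ((a, a), q))"
  have g1: "g1 \<in> E" unfolding g1_def by (rule slice_left[OF sE DE[OF f]])
  define h1 where "h1 = (\<lambda>q. IC_delta le g1 (q, (d, d)))"
  have h1: "h1 \<in> E" unfolding h1_def by (rule slice_right[OF sE DE[OF g1]])
  have "h1 = fscale (f (a, d)) (ep (a, d))"
  proof (rule ext)
    fix q :: "'a \<times> 'a"
    obtain p r where q: "q = (p, r)" by (metis prod.exhaust)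
    show "h1 q = fscale (f (a, d)) (ep (a, d)) q"
      using lrefl lad by (auto simp: q h1_def g1_def delta_app ep_def)
  qed
  then have "fscale (1 / f (a, d)) h1 = ep (a, d)"
    using fad by (simp add: fun_eq_iff)
  moreover have "fscale (1 / f (a, d)) h1 \<in> E" by (rule fs.subspace_scale[OF sE h1])
  ultimately show ?thesis by simp
qed

lemma sub_ep2:
  fixes E :: "('a \<times> 'a \<Rightarrow> 'k::field) set"
  assumes E: "subcoalgebra (IC_carrier le) (IC_delta le) E" and f: "f \<in> E" and fad: "f (a, d) \<noteq> 0"
    and ab: "le a b" and bd: "le b d"
  shows "ep (a, b) \<in> E" "ep (b, d) \<in> E"
proof -
  have sE: "lsubspace E" and DE: "\<And>g. g \<in> E \<Longrightarrow> IC_delta le g \<in> tens_sp E E"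
    using E unfolding subcoalgebra_def by auto
  have g: "(\<lambda>q. IC_delta le f ((a, b), q)) \<in> E" by (rule slice_left[OF sE DE[OF f]])
  have "(\<lambda>q. IC_delta le f ((a, b), q)) (b, d) \<noteq> 0" using fad ab bd by (simp add: delta_app)
  then show "ep (b, d) \<in> E" by (rule sub_ep[OF E g])
  have h: "(\<lambda>q. IC_delta le f (q, (b, d))) \<in> E" by (rule slice_right[OF sE DE[OF f]])
  have "(\<lambda>q. IC_delta le f (q, (b, d))) (a, b) \<noteq> 0" using fad ab bd by (simp add: delta_app)
  then show "ep (a, b) \<in> E" by (rule sub_ep[OF E h])
qed


lemma sub_le:
  fixes E :: "('a \<times> 'a \<Rightarrow> 'k::field) set"
  assumes E: "subcoalgebra (IC_carrier le) (IC_delta le) E" and f: "f \<in> E" and fad: "f (a, d) \<noteq> 0"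
  shows "le a d"
  using E f fad unfolding subcoalgebra_def IC_carrier_def by auto

lemma ep_one: "(ep p :: 'b \<Rightarrow> 'k::field) p \<noteq> 0"
  by (simp add: ep_def)

lemma ep_nz: "(ep p :: 'b \<Rightarrow> 'k::field) \<noteq> 0"
proof
  assume "(ep p :: 'b \<Rightarrow> 'k::field) = 0"
  then have "(ep p :: 'b \<Rightarrow> 'k::field) p = 0" by simp
  then show False by (simp add: ep_def)
qed

definition Kc :: "'a \<Rightarrow> 'a set" where
  "Kc a = {z. le a z \<and> le z a}"

lemma sub_class:
  fixes E :: "('a \<times> 'a \<Rightarrow> 'k::field) set"
  assumes E: "subcoalgebra (IC_carrier le) (IC_delta le) E" and f: "f \<in> E" and fad: "f (a, d) \<noteq> 0"
  shows "MS (Kc a \<times> Kc a) \<subseteq> E"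
proof (rule MS_sub)
  show "lsubspace E" using E unfolding subcoalgebra_def by auto
  have "le a a" using lrefl by auto
  have "le a d" by (rule sub_le[OF E f fad])
  have eaa: "ep (a, a) \<in> E" by (rule sub_ep2(1)[OF E f fad \<open>le a a\<close> \<open>le a d\<close>])
  fix p assume "p \<in> Kc a \<times> Kc a"
  then obtain x y where p: "p = (x, y)" and x: "le a x" "le x a" and y: "le a y" "le y a"
    unfolding Kc_def by auto
  have exa: "ep (x, a) \<in> E" by (rule sub_ep2(2)[OF E eaa ep_one x])
  have "le x y" using ltrans x y by blast
  have "ep (x, y) \<in> E" by (rule sub_ep2(1)[OF E exa ep_one \<open>le x y\<close> \<open>le y a\<close>])
  then show "ep p \<in> E" by (simp add: p)
qed

lemma MS_C: "P \<subseteq> {(x, y). le x y} \<Longrightarrow> MS P \<subseteq> (IC_carrier le :: ('a \<times> 'a \<Rightarrow> 'k::field) set)"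
  unfolding IC_eq by (rule MS_mono)

lemma MS_subcoalg:
  assumes P: "P \<subseteq> {(x, y). le x y}"
    and cl: "\<And>a b d. (a, d) \<in> P \<Longrightarrow> le a b \<Longrightarrow> le b d \<Longrightarrow> (a, b) \<in> P \<and> (b, d) \<in> P"
  shows "subcoalgebra (IC_carrier le) (IC_delta le) (MS P :: ('a \<times> 'a \<Rightarrow> 'k::field) set)"
  unfolding subcoalgebra_def
proof (intro conjI ballI)
  show "lsubspace (MS P :: ('a \<times> 'a \<Rightarrow> 'k::field) set)" by (rule MS_subspace)
  show "MS P \<subseteq> (IC_carrier le :: ('a \<times> 'a \<Rightarrow> 'k::field) set)" by (rule MS_C[OF P])
  fix f :: "'a \<times> 'a \<Rightarrow> 'k" assume f: "f \<in> MS P"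
  then have fin: "finite {p. f p \<noteq> 0}" by (simp add: MS_def)
  have "(\<Sum>t\<in>Tset le f. trm f t) \<in> tens_sp (MS P) (MS P)"
    unfolding tens_sp_def
  proof (rule fs.span_sum)
    fix t assume "t \<in> Tset le f"
    then obtain a b d where t: "t = (a, b, d)" "f (a, d) \<noteq> 0" "le a b" "le b d"
      unfolding Tset_def by blast
    have "(a, d) \<in> P" using f t(2) by (simp add: MS_def)
    then have abd: "(a, b) \<in> P \<and> (b, d) \<in> P" by (rule cl[OF _ t(3) t(4)])
    then have "ep (a, b) \<in> MS P" "ep (b, d) \<in> MS P" by (simp_all add: ep_MS)
    then have "tens (ep (a, b)) (ep (b, d)) \<in> {tens u v |u v. u \<in> MS P \<and> v \<in> MS P}"
      by blast
    then have "tens (ep (a, b)) (ep (b, d)) \<in> lspan {tens u v |u v. u \<in> MS P \<and> v \<in> MS P}"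
      by (rule fs.span_base)
    then have "fscale (f (a, d)) (tens (ep (a, b)) (ep (b, d))) \<in> lspan {tens u v |u v. u \<in> MS P \<and> v \<in> MS P}"
      by (rule fs.span_scale)
    then show "trm f t \<in> lspan {tens u v |u v. u \<in> MS P \<and> v \<in> MS P}"
      by (simp add: t(1) trm_def)
  qed
  then show "IC_delta le f \<in> tens_sp (MS P) (MS P)" by (simp only: delta_decomp[OF fin])
qed

lemma Kc_subcoalg:
  "subcoalgebra (IC_carrier le) (IC_delta le) (MS (Kc a \<times> Kc a) :: ('a \<times> 'a \<Rightarrow> 'k::field) set)"
proof (rule MS_subcoalg)
  show "Kc a \<times> Kc a \<subseteq> {(x, y). le x y}"
  proof
    fix p assume "p \<in> Kc a \<times> Kc a"
    then obtain x y where "p = (x, y)" "le x a" "le a y" unfolding Kc_def by blast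
    moreover have "le x y" using ltrans \<open>le x a\<close> \<open>le a y\<close> by blast
    ultimately show "p \<in> {(x, y). le x y}" by simp
  qed
  fix u b v assume uv: "(u, v) \<in> Kc a \<times> Kc a" and ub: "le u b" and bv: "le b v"
  then have u: "le a u" "le u a" and v: "le a v" "le v a" unfolding Kc_def by auto
  have "le a b" using ltrans u(1) ub by blast
  moreover have "le b a" using ltrans bv v(2) by blast
  ultimately have "b \<in> Kc a" unfolding Kc_def by simp
  then show "(u, b) \<in> Kc a \<times> Kc a \<and> (b, v) \<in> Kc a \<times> Kc a" using uv by simp
qed

lemma Kc_same: "x \<in> Kc a \<Longrightarrow> Kc x = Kc a"
  using ltrans unfolding Kc_def by blast

lemma nonzero_elem:
  fixes E :: "('b \<Rightarrow> 'k::field) set"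
  assumes "lsubspace E" "E \<noteq> {0}"
  obtains f p where "f \<in> E" "f p \<noteq> 0"
proof -
  from assms obtain f where "f \<in> E" "f \<noteq> 0" using fs.subspace_0 by blast
  then obtain p where "f p \<noteq> 0" by (auto simp: fun_eq_iff)
  then show ?thesis using that \<open>f \<in> E\<close> by blast
qed

lemma Kc_simple:
  "simple_subcoalgebra (IC_carrier le) (IC_delta le) (MS (Kc a \<times> Kc a) :: ('a \<times> 'a \<Rightarrow> 'k::field) set)"
  unfolding simple_subcoalgebra_def
proof (intro conjI allI impI)
  show "subcoalgebra (IC_carrier le) (IC_delta le) (MS (Kc a \<times> Kc a) :: ('a \<times> 'a \<Rightarrow> 'k::field) set)"
    by (rule Kc_subcoalg)
  have "a \<in> Kc a" using lrefl unfolding Kc_def by auto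
  then have "(ep (a, a) :: 'a \<times> 'a \<Rightarrow> 'k) \<in> MS (Kc a \<times> Kc a)" by (intro ep_MS) auto
  moreover have "(ep (a, a) :: 'a \<times> 'a \<Rightarrow> 'k) \<noteq> 0" by (rule ep_nz)
  ultimately show "(MS (Kc a \<times> Kc a) :: ('a \<times> 'a \<Rightarrow> 'k) set) \<noteq> {0}" by auto
  fix F :: "('a \<times> 'a \<Rightarrow> 'k) set"
  assume F: "subcoalgebra (IC_carrier le) (IC_delta le) F \<and> F \<subseteq> MS (Kc a \<times> Kc a)"
  show "F = {0} \<or> F = MS (Kc a \<times> Kc a)"
  proof (cases "F = {0}")
    case False
    have sF: "lsubspace F" using F unfolding subcoalgebra_def by auto
    obtain f p where f: "f \<in> F" "f p \<noteq> 0" using nonzero_elem[OF sF False] by blast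
    obtain x y where p: "p = (x, y)" by (metis prod.exhaust)
    have fxy: "f (x, y) \<noteq> 0" using f p by simp
    have Fs: "subcoalgebra (IC_carrier le) (IC_delta le) F" and FK: "F \<subseteq> MS (Kc a \<times> Kc a)" using F by blast+
    have "f \<in> MS (Kc a \<times> Kc a)" using FK f(1) by blast
    then have "(x, y) \<in> Kc a \<times> Kc a" using fxy unfolding MS_def by blast
    then have "x \<in> Kc a" by blast
    then have "Kc x = Kc a" by (rule Kc_same)
    moreover have "MS (Kc x \<times> Kc x) \<subseteq> F" by (rule sub_class[OF Fs f(1) fxy])
    ultimately have "MS (Kc a \<times> Kc a) \<subseteq> F" by simp
    with FK have "F = MS (Kc a \<times> Kc a)" by (rule subset_antisym)
    then show ?thesis by (rule disjI2)
  qed simp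
qed

lemma simple_sub_R:
  fixes E :: "('a \<times> 'a \<Rightarrow> 'k::field) set"
  assumes E: "simple_subcoalgebra (IC_carrier le) (IC_delta le) E"
  shows "E \<subseteq> MS (Wn le 0)"
proof -
  have Es: "subcoalgebra (IC_carrier le) (IC_delta le) E" and nz: "E \<noteq> {0}"
    and mn: "\<And>F. subcoalgebra (IC_carrier le) (IC_delta le) F \<Longrightarrow> F \<subseteq> E \<Longrightarrow> F = {0} \<or> F = E"
    using E unfolding simple_subcoalgebra_def by auto
  have sE: "lsubspace E" using Es unfolding subcoalgebra_def by auto
  obtain f p where f: "f \<in> E" "f p \<noteq> 0" using nonzero_elem[OF sE nz] by blast
  obtain x y where p: "p = (x, y)" by (metis prod.exhaust)
  have fxy: "f (x, y) \<noteq> 0" using f p by simp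
  have sub: "MS (Kc x \<times> Kc x) \<subseteq> E" by (rule sub_class[OF Es f(1) fxy])
  have "x \<in> Kc x" using lrefl unfolding Kc_def by auto
  then have "(ep (x, x) :: 'a \<times> 'a \<Rightarrow> 'k) \<in> MS (Kc x \<times> Kc x)" by (intro ep_MS) auto
  moreover have "(ep (x, x) :: 'a \<times> 'a \<Rightarrow> 'k) \<noteq> 0" by (rule ep_nz)
  ultimately have "(MS (Kc x \<times> Kc x) :: ('a \<times> 'a \<Rightarrow> 'k) set) \<noteq> {0}" by auto
  then have "MS (Kc x \<times> Kc x) = E" using mn[OF Kc_subcoalg sub] by auto
  moreover have "Kc x \<times> Kc x \<subseteq> Wn le 0" unfolding Kc_def Wn.simps using ltrans by blast
  then have "MS (Kc x \<times> Kc x) \<subseteq> (MS (Wn le 0) :: ('a \<times> 'a \<Rightarrow> 'k) set)" by (rule MS_mono)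
  ultimately show ?thesis by simp
qed

lemma coradical_eq:
  "coradical (IC_carrier le) (IC_delta le) = (MS (Wn le 0) :: ('a \<times> 'a \<Rightarrow> 'k::field) set)"
proof
  show "coradical (IC_carrier le) (IC_delta le) \<subseteq> (MS (Wn le 0) :: ('a \<times> 'a \<Rightarrow> 'k::field) set)"
    unfolding coradical_def
  proof (rule fs.span_minimal)
    show "\<Union> {E. simple_subcoalgebra (IC_carrier le) (IC_delta le) E} \<subseteq> (MS (Wn le 0) :: ('a \<times> 'a \<Rightarrow> 'k::field) set)"
    proof (rule Union_least)
      fix E :: "('a \<times> 'a \<Rightarrow> 'k::field) set"
      assume "E \<in> {E. simple_subcoalgebra (IC_carrier le) (IC_delta le) E}"
      then show "E \<subseteq> MS (Wn le 0)" by (intro simple_sub_R) simp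
    qed
  qed (rule MS_subspace)
  show "(MS (Wn le 0) :: ('a \<times> 'a \<Rightarrow> 'k::field) set) \<subseteq> coradical (IC_carrier le) (IC_delta le)"
    unfolding coradical_def
  proof (rule MS_sub)
    show "lsubspace (lspan (\<Union> {E. simple_subcoalgebra (IC_carrier le) (IC_delta le) (E :: ('a \<times> 'a \<Rightarrow> 'k) set)}))"
      by (rule fs.subspace_span)
    fix p assume "p \<in> Wn le 0"
    then obtain x y where p: "p = (x, y)" "le x y" "le y x" by auto
    have "p \<in> Kc x \<times> Kc x" using p lrefl unfolding Kc_def by auto
    then have "(ep p :: 'a \<times> 'a \<Rightarrow> 'k) \<in> MS (Kc x \<times> Kc x)" by (rule ep_MS)
    then have "(ep p :: 'a \<times> 'a \<Rightarrow> 'k) \<in> \<Union> {E. simple_subcoalgebra (IC_carrier le) (IC_delta le) E}"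
      using Kc_simple[of x] by (intro UnionI[of "MS (Kc x \<times> Kc x)"]) auto
    then show "ep p \<in> lspan (\<Union> {E. simple_subcoalgebra (IC_carrier le) (IC_delta le) (E :: ('a \<times> 'a \<Rightarrow> 'k) set)})"
      by (rule fs.span_base)
  qed
qed

lemma TT_subspace:
  "lsubspace {h :: ('b \<times> 'b) \<times> ('b \<times> 'b) \<Rightarrow> 'k::field. \<forall>x y. h (x, y) \<noteq> 0 \<longrightarrow> x \<in> P \<or> y \<in> Q}"
proof (rule fs.subspaceI)
  show "0 \<in> {h :: ('b \<times> 'b) \<times> ('b \<times> 'b) \<Rightarrow> 'k::field. \<forall>x y. h (x, y) \<noteq> 0 \<longrightarrow> x \<in> P \<or> y \<in> Q}"
    by simp
next
  fix g h :: "('b \<times> 'b) \<times> ('b \<times> 'b) \<Rightarrow> 'k"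
  assume g: "g \<in> {h. \<forall>x y. h (x, y) \<noteq> 0 \<longrightarrow> x \<in> P \<or> y \<in> Q}" and h: "h \<in> {h. \<forall>x y. h (x, y) \<noteq> 0 \<longrightarrow> x \<in> P \<or> y \<in> Q}"
  show "g + h \<in> {h. \<forall>x y. h (x, y) \<noteq> 0 \<longrightarrow> x \<in> P \<or> y \<in> Q}"
  proof (intro CollectI allI impI)
    fix x y assume "(g + h) (x, y) \<noteq> 0"
    then have "g (x, y) \<noteq> 0 \<or> h (x, y) \<noteq> 0" by auto
    then show "x \<in> P \<or> y \<in> Q" using g h by blast
  qed
next
  fix c and h :: "('b \<times> 'b) \<times> ('b \<times> 'b) \<Rightarrow> 'k"
  assume h: "h \<in> {h. \<forall>x y. h (x, y) \<noteq> 0 \<longrightarrow> x \<in> P \<or> y \<in> Q}"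
  show "fscale c h \<in> {h. \<forall>x y. h (x, y) \<noteq> 0 \<longrightarrow> x \<in> P \<or> y \<in> Q}"
  proof (intro CollectI allI impI)
    fix x y assume "fscale c h (x, y) \<noteq> 0"
    then have "h (x, y) \<noteq> 0" by auto
    then show "x \<in> P \<or> y \<in> Q" using h by blast
  qed
qed

lemma wedge_eq:
  "wedge (IC_carrier le) (IC_delta le) (MS P) (MS Q) = (MS (Wd le P Q) :: ('a \<times> 'a \<Rightarrow> 'k::field) set)"
proof
  let ?C = "IC_carrier le :: ('a \<times> 'a \<Rightarrow> 'k) set"
  let ?TT = "{h :: ('a \<times> 'a) \<times> ('a \<times> 'a) \<Rightarrow> 'k. \<forall>x y. h (x, y) \<noteq> 0 \<longrightarrow> x \<in> P \<or> y \<in> Q}"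
  show "wedge (IC_carrier le) (IC_delta le) (MS P) (MS Q) \<subseteq> (MS (Wd le P Q) :: ('a \<times> 'a \<Rightarrow> 'k::field) set)"
  proof
    fix f :: "'a \<times> 'a \<Rightarrow> 'k"
    assume "f \<in> wedge (IC_carrier le) (IC_delta le) (MS P) (MS Q)"
    then have fC: "f \<in> ?C" and Dsp: "IC_delta le f \<in> lspan (tens_sp (MS P) ?C \<union> tens_sp ?C (MS Q))"
      unfolding wedge_def by auto
    have A: "tens_sp (MS P) ?C \<subseteq> ?TT"
      unfolding tens_sp_def
    proof (rule fs.span_minimal[OF _ TT_subspace])
      show "{tens u v |u v. u \<in> MS P \<and> v \<in> ?C} \<subseteq> ?TT"
      proof
        fix h assume "h \<in> {tens u v |u v. u \<in> MS P \<and> v \<in> ?C}"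
        then obtain u v where h: "h = tens u v" and u: "u \<in> MS P" by blast
        show "h \<in> ?TT"
        proof (intro CollectI allI impI)
          fix x y assume "h (x, y) \<noteq> 0"
          then have "u x \<noteq> 0" by (auto simp: h tens_def)
          then show "x \<in> P \<or> y \<in> Q" using u unfolding MS_def by blast
        qed
      qed
    qed
    have B: "tens_sp ?C (MS Q) \<subseteq> ?TT"
      unfolding tens_sp_def
    proof (rule fs.span_minimal[OF _ TT_subspace])
      show "{tens u v |u v. u \<in> ?C \<and> v \<in> MS Q} \<subseteq> ?TT"
      proof
        fix h assume "h \<in> {tens u v |u v. u \<in> ?C \<and> v \<in> MS Q}"
        then obtain u v where h: "h = tens u v" and v: "v \<in> MS Q" by blast
        show "h \<in> ?TT"
        proof (intro CollectI allI impI)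
          fix x y assume "h (x, y) \<noteq> 0"
          then have "v y \<noteq> 0" by (auto simp: h tens_def)
          then show "x \<in> P \<or> y \<in> Q" using v unfolding MS_def by blast
        qed
      qed
    qed
    have "lspan (tens_sp (MS P) ?C \<union> tens_sp ?C (MS Q)) \<subseteq> ?TT"
      by (rule fs.span_minimal[OF _ TT_subspace]) (use A B in blast)
    with Dsp have DT: "IC_delta le f \<in> ?TT" by blast
    have fin: "finite {p. f p \<noteq> 0}" using fC unfolding IC_carrier_def by simp
    have "\<forall>p. f p \<noteq> 0 \<longrightarrow> p \<in> Wd le P Q"
    proof (intro allI impI)
      fix p assume fp: "f p \<noteq> 0"
      obtain a d where p: "p = (a, d)" by (metis prod.exhaust)
      have lad: "le a d" using fC fp p unfolding IC_carrier_def by auto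
      have "\<forall>b. le a b \<and> le b d \<longrightarrow> (a, b) \<in> P \<or> (b, d) \<in> Q"
      proof (intro allI impI)
        fix b assume "le a b \<and> le b d"
        then have "IC_delta le f ((a, b), (b, d)) \<noteq> 0" using fp p by (simp add: delta_app)
        then show "(a, b) \<in> P \<or> (b, d) \<in> Q" using DT by blast
      qed
      then show "p \<in> Wd le P Q" using lad p by (simp add: Wd_def)
    qed
    then show "f \<in> MS (Wd le P Q)" using fin by (simp add: MS_def)
  qed
  show "(MS (Wd le P Q) :: ('a \<times> 'a \<Rightarrow> 'k::field) set) \<subseteq> wedge (IC_carrier le) (IC_delta le) (MS P) (MS Q)"
  proof
    fix f :: "'a \<times> 'a \<Rightarrow> 'k"
    assume f: "f \<in> MS (Wd le P Q)"
    have WdC: "Wd le P Q \<subseteq> {(x, y). le x y}" unfolding Wd_def by auto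
    have fC: "f \<in> ?C" using MS_C[OF WdC] f by blast
    have fin: "finite {p. f p \<noteq> 0}" using f by (simp add: MS_def)
    let ?S = "tens_sp (MS P) ?C \<union> tens_sp ?C (MS Q)"
    have "(\<Sum>t\<in>Tset le f. trm f t) \<in> lspan ?S"
    proof (rule fs.span_sum)
      fix t assume "t \<in> Tset le f"
      then obtain a b d where t: "t = (a, b, d)" "f (a, d) \<noteq> 0" "le a b" "le b d"
        unfolding Tset_def by blast
      have "(a, d) \<in> Wd le P Q" using f t(2) by (simp add: MS_def)
      then have cases: "(a, b) \<in> P \<or> (b, d) \<in> Q" using t(3,4) unfolding Wd_def by blast
      have lab: "le a b" and lbd: "le b d" using t by auto
      have eab: "ep (a, b) \<in> ?C" unfolding IC_eq using lab by (intro ep_MS) simp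
      have ebd: "ep (b, d) \<in> ?C" unfolding IC_eq using lbd by (intro ep_MS) simp
      have "tens (ep (a, b)) (ep (b, d)) \<in> ?S"
      proof (cases "(a, b) \<in> P")
        case True
        then have "ep (a, b) \<in> MS P" by (rule ep_MS)
        then have "tens (ep (a, b)) (ep (b, d)) \<in> {tens u v |u v. u \<in> MS P \<and> v \<in> ?C}"
          using ebd by blast
        then have "tens (ep (a, b)) (ep (b, d)) \<in> tens_sp (MS P) ?C"
          unfolding tens_sp_def by (rule fs.span_base)
        then show ?thesis by blast
      next
        case False
        then have "(b, d) \<in> Q" using cases by blast
        then have "ep (b, d) \<in> MS Q" by (rule ep_MS)
        then have "tens (ep (a, b)) (ep (b, d)) \<in> {tens u v |u v. u \<in> ?C \<and> v \<in> MS Q}"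
          using eab by blast
        then have "tens (ep (a, b)) (ep (b, d)) \<in> tens_sp ?C (MS Q)"
          unfolding tens_sp_def by (rule fs.span_base)
        then show ?thesis by blast
      qed
      then have "tens (ep (a, b)) (ep (b, d)) \<in> lspan ?S" by (rule fs.span_base)
      then have "fscale (f (a, d)) (tens (ep (a, b)) (ep (b, d))) \<in> lspan ?S" by (rule fs.span_scale)
      then show "trm f t \<in> lspan ?S" by (simp add: t(1) trm_def)
    qed
    then have "IC_delta le f \<in> lspan ?S" by (simp only: delta_decomp[OF fin])
    then show "f \<in> wedge (IC_carrier le) (IC_delta le) (MS P) (MS Q)"
      using fC unfolding wedge_def by blast
  qed
qed

lemma filt_eq:
  "coradical_filt (IC_carrier le) (IC_delta le) n = (MS (Wn le n) :: ('a \<times> 'a \<Rightarrow> 'k::field) set)"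
proof (induction n)
  case 0
  show ?case by (simp only: coradical_filt.simps coradical_eq)
next
  case (Suc n)
  have "coradical_filt (IC_carrier le) (IC_delta le) (Suc n)
      = wedge (IC_carrier le) (IC_delta le) (MS (Wn le 0)) (MS (Wn le n) :: ('a \<times> 'a \<Rightarrow> 'k::field) set)"
    by (simp only: coradical_filt.simps coradical_eq Suc.IH)
  also have "\<dots> = MS (Wd le (Wn le 0) (Wn le n))" by (rule wedge_eq)
  also have "Wd le (Wn le 0) (Wn le n) = Wn le (Suc n)"
    by (simp only: Wd_def Wn.simps)
  finally show ?case .
qed
end


lemma Wn_le: "Wn le n \<subseteq> {(x, y). le x y}"
  by (cases n) auto

lemma e_basis_ep: "e_basis x y = ep (x, y)"
  by (simp add: e_basis_def ep_def)

theorem mainTheorem6: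
  fixes le :: "'a \<Rightarrow> 'a \<Rightarrow> bool"
  assumes refl: "\<forall>x. le x x"
    and trans: "\<forall>x y z. le x y \<longrightarrow> le y z \<longrightarrow> le x z"
    and locfin: "\<forall>x y. finite {z. le x z \<and> le z y}"
  shows "coradical_basis (IC_carrier le :: ('a \<times> 'a \<Rightarrow> 'k::field) set) (IC_delta le)
           {e_basis x y | x y. le x y}"
proof -
  let ?L = "{(x, y). le x y}"
  have B: "{e_basis x y | x y. le x y} = (ep ` ?L :: ('a \<times> 'a \<Rightarrow> 'k) set)"
    by (auto simp: e_basis_ep)
  have inter: "ep ` ?L \<inter> MS W = (ep ` W :: ('a \<times> 'a \<Rightarrow> 'k) set)" if W: "W \<subseteq> ?L" for W
    using W by (auto simp: ep_MS_iff)
  show ?thesis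
    unfolding coradical_basis_def B
  proof (intro conjI allI)
    show "is_basis_of (ep ` ?L) (IC_carrier le :: ('a \<times> 'a \<Rightarrow> 'k) set)"
      unfolding IC_eq by (rule basis_ep)
    fix n
    show "is_basis_of (ep ` ?L \<inter> coradical_filt (IC_carrier le) (IC_delta le) n)
            (coradical_filt (IC_carrier le) (IC_delta le) n :: ('a \<times> 'a \<Rightarrow> 'k) set)"
      unfolding filt_eq[OF refl trans locfin] inter[OF Wn_le] by (rule basis_ep)
  qed
qed

end
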